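(* Let $s,t,p\ge 1$, $A,B\in GL(n)$ and $Q\in\mathcal{P}(n)$. If $X$ is a Hermitian positive definite solution of $X^s+A^*X^{-t}A+B^*X^{-p}B=Q$, then $X\in[cI,\,Q^{1/s}]$, where $$c=\max\{\lambda_n^{1/t}(AQ^{-1}A^* ),\;\lambda_n^{1/p}(BQ^{-1}B^* )\}.$$
   Context: $GL(n)$: $n\times n$ complex nonsingular matrices; $\mathcal{P}(n)$: $n\times n$ Hermitian positive definite matrices. For Hermitian $M$, $\lambda_n(M)$ is its smallest eigenvalue. For Hermitian $P,R$, $P\le R$ means $R-P$ is positive semidefinite, and $[P,R]=\{X \text{ Hermitian}: P\le X\le R\}$. Real powers of positive definite matrices are defined by functional calculus. *)

theory Defs
  imports "HOL-Analysis.Analysis"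
begin

text \<open>Complex n x n matrices are rendered as complex^'n^'n (n = CARD('n)).\<close>

definition adjoint :: "complex^'n^'m \<Rightarrow> complex^'m^'n" where
  "adjoint M = (\<chi> i j. cnj (M $ j $ i))"

definition hermitian :: "complex^'n^'n \<Rightarrow> bool" where
  "hermitian M \<longleftrightarrow> adjoint M = M"

definition quad_form :: "complex^'n^'n \<Rightarrow> complex^'n \<Rightarrow> complex" where
  "quad_form M v = (\<Sum>i\<in>UNIV. cnj (v $ i) * (M *v v) $ i)"

definition pos_def :: "complex^'n^'n \<Rightarrow> bool" where
  "pos_def M \<longleftrightarrow> hermitian M \<and> (\<forall>v. v \<noteq> 0 \<longrightarrow> Re (quad_form M v) > 0)"

definition pos_semidef :: "complex^'n^'n \<Rightarrow> bool" where
  "pos_semidef M \<longleftrightarrow> hermitian M \<and> (\<forall>v. Re (quad_form M v) \<ge> 0)"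

definition loewner_le :: "complex^'n^'n \<Rightarrow> complex^'n^'n \<Rightarrow> bool" where
  "loewner_le P R \<longleftrightarrow> hermitian P \<and> hermitian R \<and> pos_semidef (R - P)"

definition real_diag :: "('n \<Rightarrow> real) \<Rightarrow> complex^'n^'n" where
  "real_diag d = (\<chi> i j. if i = j then complex_of_real (d i) else 0)"

definition unitary :: "complex^'n^'n \<Rightarrow> bool" where
  "unitary U \<longleftrightarrow> U ** adjoint U = mat 1 \<and> adjoint U ** U = mat 1"

definition mat_powr :: "complex^'n^'n \<Rightarrow> real \<Rightarrow> complex^'n^'n" where
  "mat_powr P r = (SOME Y. \<exists>U d. unitary U \<and> P = U ** real_diag d ** adjoint U
       \<and> Y = U ** real_diag (\<lambda>i. d i powr r) ** adjoint U)"

text \<open>Smallest eigenvalue of a Hermitian matrix (its eigenvalues are real).\<close>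
definition lambda_min :: "complex^'n^'n \<Rightarrow> real" where
  "lambda_min M = Min {x::real. \<exists>v. v \<noteq> 0 \<and> M *v v = complex_of_real x *s v}"

end

theory Submission
  imports Defs
begin


definition cinner :: "complex^'n \<Rightarrow> complex^'n \<Rightarrow> complex" where
  "cinner u v = (\<Sum>i\<in>UNIV. cnj (u $ i) * v $ i)"

lemma quad_form_cinner: "quad_form M v = cinner v (M *v v)"
  by (simp add: quad_form_def cinner_def)

lemma adjoint_nth[simp]: "adjoint M $ i $ j = cnj (M $ j $ i)"
  by (simp add: adjoint_def)

lemma adjoint_adjoint[simp]: "adjoint (adjoint M) = M"
  by (simp add: vec_eq_iff)

lemma adjoint_mult: "adjoint (A ** B) = adjoint B ** adjoint A"
  by (simp add: vec_eq_iff matrix_matrix_mult_def mult.commute)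

lemma adjoint_add: "adjoint (A + B) = adjoint A + adjoint B"
  by (simp add: vec_eq_iff)

lemma adjoint_diff: "adjoint (A - B) = adjoint A - adjoint B"
  by (simp add: vec_eq_iff)

lemma adjoint_mat_real: "adjoint (mat (complex_of_real c) :: complex^'n^'n) = mat (complex_of_real c)"
  by (simp add: vec_eq_iff mat_def)

lemma adjoint_real_diag: "adjoint (real_diag d) = real_diag d"
  by (simp add: vec_eq_iff real_diag_def)

lemma cinner_adj: "cinner u (M *v v) = cinner (adjoint M *v u) v"
proof -
  have "cinner u (M *v v) = (\<Sum>i\<in>UNIV. \<Sum>j\<in>UNIV. cnj (u $ i) * M $ i $ j * v $ j)"
    by (simp add: cinner_def matrix_vector_mult_def sum_distrib_left mult.assoc)
  also have "\<dots> = (\<Sum>j\<in>UNIV. \<Sum>i\<in>UNIV. cnj (u $ i) * M $ i $ j * v $ j)"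
    by (rule sum.swap)
  also have "\<dots> = cinner (adjoint M *v u) v"
    by (simp add: cinner_def matrix_vector_mult_def sum_distrib_left ac_simps)
  finally show ?thesis .
qed

lemma cinner_commute: "cinner v u = cnj (cinner u v)"
  by (simp add: cinner_def mult.commute)

lemma cinner_add_left: "cinner (a + b) c = cinner a c + cinner b c"
  by (simp add: cinner_def algebra_simps sum.distrib)
lemma cinner_add_right: "cinner c (a + b) = cinner c a + cinner c b"
  by (simp add: cinner_def algebra_simps sum.distrib)
lemma cinner_diff_left: "cinner (a - b) c = cinner a c - cinner b c"
  by (simp add: cinner_def algebra_simps sum_subtractf)
lemma cinner_diff_right: "cinner c (a - b) = cinner c a - cinner c b"
  by (simp add: cinner_def algebra_simps sum_subtractf)
lemma cinner_smult_left: "cinner (k *s a) c = cnj k * cinner a c"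
  by (simp add: cinner_def sum_distrib_left mult.assoc)
lemma cinner_smult_right: "cinner c (k *s a) = k * cinner c a"
  by (simp add: cinner_def sum_distrib_left algebra_simps)
lemma vec_scaleR_nth: "((r::real) *\<^sub>R (a::complex^'n)) $ i = complex_of_real r * a $ i"
  unfolding vector_scaleR_component by (rule scaleR_conv_of_real)
lemma cinner_scaleR_left: "cinner (r *\<^sub>R a) c = of_real r * cinner a c"
  by (simp only: cinner_def vec_scaleR_nth sum_distrib_left) (simp add: ac_simps)
lemma cinner_scaleR_right: "cinner c (r *\<^sub>R a) = of_real r * cinner c a"
  by (simp only: cinner_def vec_scaleR_nth sum_distrib_left) (simp add: ac_simps)
lemma cinner_zero_left[simp]: "cinner 0 c = 0" by (simp add: cinner_def)
lemma cinner_zero_right[simp]: "cinner c 0 = 0" by (simp add: cinner_def)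

lemma cinner_self: "cinner v v = complex_of_real ((norm v)\<^sup>2)"
proof -
  have "cinner v v = (\<Sum>i\<in>UNIV. complex_of_real ((cmod (v $ i))\<^sup>2))"
    unfolding cinner_def by (intro sum.cong refl) (simp add: complex_norm_square mult.commute flip: of_real_power)
  also have "\<dots> = complex_of_real ((norm v)\<^sup>2)"
    by (simp add: norm_vec_def L2_set_def sum_nonneg)
  finally show ?thesis .
qed

lemma Re_cinner_self: "Re (cinner v v) = (norm v)\<^sup>2"
  by (simp add: cinner_self)

lemma matrix_vector_mult_add: "M *v (a + b) = M *v a + M *v b"
  by (simp add: matrix_vector_right_distrib)
lemma matrix_vector_mult_diff': "(M::complex^'n^'m) *v (a - b) = M *v a - M *v b"
  by (simp add: vec_eq_iff matrix_vector_mult_def algebra_simps sum_subtractf)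
lemma matrix_vector_mult_scaleR': "(M::complex^'n^'m) *v (r *\<^sub>R a) = r *\<^sub>R (M *v a)"
  by (simp only: vec_eq_iff matrix_vector_mult_def vec_scaleR_nth vec_lambda_beta sum_distrib_left) (simp add: ac_simps)
lemma matrix_vector_mult_smult': "(M::complex^'n^'m) *v (k *s a) = k *s (M *v a)"
  by (simp add: vec_eq_iff matrix_vector_mult_def sum_distrib_left algebra_simps)

lemma hermitian_cinner: "hermitian M \<Longrightarrow> cinner u (M *v v) = cinner (M *v u) v"
  using cinner_adj[of u M v] by (simp add: hermitian_def)

lemma hermitian_quad_real: "hermitian M \<Longrightarrow> quad_form M v = complex_of_real (Re (quad_form M v))"
proof -
  assume h: "hermitian M"
  have "cnj (quad_form M v) = cinner (M *v v) v"
    by (simp only: quad_form_cinner cinner_commute[of "M *v v" v])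
  also have "\<dots> = quad_form M v" by (simp only: quad_form_cinner hermitian_cinner[OF h])
  finally have "cnj (quad_form M v) = quad_form M v" .
  then have "Im (quad_form M v) = 0" by (simp add: complex_eq_iff)
  then show ?thesis by (simp add: complex_eq_iff)
qed



lemma inner_cvec: "inner (x::complex^'n) y = Re (cinner x y)"
  by (simp add: inner_vec_def cinner_def inner_complex_def Re_sum)

lemma exists_orth:
  fixes T :: "(complex^'n) set"
  assumes "finite T" "card T < CARD('n)"
  shows "\<exists>x. x \<noteq> 0 \<and> (\<forall>u\<in>T. cinner u x = 0)"
proof -
  define R where "R = T \<union> (\<lambda>u. \<i> *s u) ` T"
  have fR: "finite R" using assms by (simp add: R_def)
  have "card R \<le> card T + card ((\<lambda>u. \<i> *s u) ` T)" unfolding R_def by (rule card_Un_le)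
  also have "\<dots> \<le> card T + card T" using card_image_le[OF assms(1)] by simp
  finally have "card R \<le> card T + card T" .
  then have "dim R < DIM(complex^'n)" using dim_le_card[OF span_superset fR] assms(2) by simp
  then obtain x :: "complex^'n" where x: "x \<noteq> 0" "\<And>y. y \<in> span R \<Longrightarrow> orthogonal x y"
    using orthogonal_to_subspace_exists[of R] by blast
  have "cinner u x = 0" if u: "u \<in> T" for u
  proof -
    have "orthogonal x u" using x(2)[OF span_base] u by (simp add: R_def)
    then have 1: "Re (cinner x u) = 0" by (simp add: orthogonal_def inner_cvec)
    have "orthogonal x (\<i> *s u)" using x(2)[OF span_base] u by (simp add: R_def)
    then have "Re (cinner x (\<i> *s u)) = 0" by (simp add: orthogonal_def inner_cvec)
    then have 2: "Im (cinner x u) = 0" by (simp add: cinner_smult_right)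
    from 1 2 have "cinner x u = 0" by (simp add: complex_eq_iff)
    then show ?thesis by (subst cinner_commute) simp
  qed
  with x show ?thesis by blast
qed



lemma cont_cinner: "continuous_on UNIV (\<lambda>v. cinner u (v::complex^'n))"
  unfolding cinner_def by (intro continuous_intros)

lemma cont_qf: "continuous_on S (\<lambda>v. Re (quad_form H (v::complex^'n)))"
  unfolding quad_form_def matrix_vector_mult_def by (intro continuous_intros)

lemma quad_form_scaleR: "quad_form H (r *\<^sub>R y) = complex_of_real (r\<^sup>2) * quad_form H y"
  by (simp add: quad_form_cinner matrix_vector_mult_scaleR' cinner_scaleR_left cinner_scaleR_right power2_eq_square)

lemma expand_qf:
  assumes h: "hermitian H"
  shows "Re (cinner (v + e *\<^sub>R z) (H *v (v + e *\<^sub>R z))) =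
     Re (cinner v (H *v v)) + 2 * e * Re (cinner z (H *v v)) + e\<^sup>2 * Re (cinner z (H *v z))"
proof -
  have 1: "cinner v (H *v z) = cnj (cinner z (H *v v))"
    using hermitian_cinner[OF h, of v z] cinner_commute[of "H *v v" z] by simp
  show ?thesis
    by (simp add: matrix_vector_mult_add matrix_vector_mult_scaleR' cinner_add_left cinner_add_right
        cinner_scaleR_left cinner_scaleR_right 1 power2_eq_square algebra_simps)
qed

lemma expand_norm:
  "(norm (v + e *\<^sub>R z))\<^sup>2 = (norm v)\<^sup>2 + 2 * e * Re (cinner z (v::complex^'n)) + e\<^sup>2 * (norm z)\<^sup>2"
proof -
  have 1: "cinner v z = cnj (cinner z v)" by (rule cinner_commute)
  have "(norm (v + e *\<^sub>R z))\<^sup>2 = Re (cinner (v + e *\<^sub>R z) (v + e *\<^sub>R z))"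
    by (simp only: Re_cinner_self)
  also have "\<dots> = Re (cinner v v) + 2 * e * Re (cinner z v) + e\<^sup>2 * Re (cinner z z)"
    by (simp add: cinner_add_left cinner_add_right
        cinner_scaleR_left cinner_scaleR_right 1 power2_eq_square algebra_simps)
  finally show ?thesis by (simp only: Re_cinner_self)
qed

lemma max_eig:
  fixes H :: "complex^'n^'n" and T :: "(complex^'n) set"
  assumes h: "hermitian H" and fT: "finite T"
    and inv: "\<And>v. (\<forall>u\<in>T. cinner u v = 0) \<Longrightarrow> (\<forall>u\<in>T. cinner u (H *v v) = 0)"
    and ne: "x \<noteq> 0" "\<forall>u\<in>T. cinner u x = 0"
  shows "\<exists>v m. norm v = 1 \<and> (\<forall>u\<in>T. cinner u v = 0) \<and> H *v v = complex_of_real m *s v"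
proof -
  define W where "W = {v::complex^'n. \<forall>u\<in>T. cinner u v = 0}"
  have Wsc: "r *\<^sub>R y \<in> W" if "y \<in> W" for y r using that by (simp add: W_def cinner_scaleR_right)
  have Wadd: "y + y' \<in> W" if "y \<in> W" "y' \<in> W" for y y' using that by (simp add: W_def cinner_add_right)
  have Wdiff: "y - y' \<in> W" if "y \<in> W" "y' \<in> W" for y y' using that by (simp add: W_def cinner_diff_right)
  have WH: "H *v y \<in> W" if "y \<in> W" for y using that inv by (simp add: W_def)
  have "W = (\<Inter>u\<in>T. {v. cinner u v = 0})" by (auto simp: W_def)
  then have clW: "closed W"
    by (auto intro!: closed_INT closed_Collect_eq cont_cinner continuous_intros)
  define K where "K = W \<inter> sphere 0 1"
  have cK: "compact K" unfolding K_def by (rule closed_Int_compact[OF clW compact_sphere])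
  have "(1 / norm x) *\<^sub>R x \<in> K"
    using ne by (auto simp: K_def W_def cinner_scaleR_right)
  then have Kne: "K \<noteq> {}" by blast
  obtain v0 where v0: "v0 \<in> K" and mx: "\<And>y. y \<in> K \<Longrightarrow> Re (quad_form H y) \<le> Re (quad_form H v0)"
    using continuous_attains_sup[OF cK Kne cont_qf] by blast
  define m where "m = Re (quad_form H v0)"
  have v0W: "v0 \<in> W" and nv0: "norm v0 = 1" using v0 by (auto simp: K_def)
  have bound: "Re (quad_form H y) \<le> m * (norm y)\<^sup>2" if y: "y \<in> W" for y
  proof (cases "y = 0")
    case True then show ?thesis by (simp add: quad_form_def matrix_vector_mult_def)
  next
    case False
    define y' where "y' = (1 / norm y) *\<^sub>R y"
    have "y' \<in> K" using False Wsc[OF y] by (simp add: K_def y'_def)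
    then have "Re (quad_form H y') \<le> m" using mx by (simp add: m_def)
    moreover have "Re (quad_form H y') = (1 / norm y)\<^sup>2 * Re (quad_form H y)"
      by (simp add: y'_def quad_form_scaleR)
    ultimately have "(1 / norm y)\<^sup>2 * Re (quad_form H y) \<le> m" by simp
    then show ?thesis using False by (simp add: field_simps)
  qed
  define z where "z = H *v v0 - complex_of_real m *s v0"
  have zW: "z \<in> W" unfolding z_def
    using Wdiff[OF WH[OF v0W], of "complex_of_real m *s v0"] v0W
    by (simp add: W_def cinner_smult_right)
  have Hv0: "H *v v0 = z + complex_of_real m *s v0" by (simp add: z_def)
  define a where "a = (norm z)\<^sup>2"
  define c where "c = m * (norm z)\<^sup>2 - Re (cinner z (H *v z))"
  have key: "2 * e * a \<le> e\<^sup>2 * c" for e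
  proof -
    have "v0 + e *\<^sub>R z \<in> W" using Wadd[OF v0W Wsc[OF zW]] .
    from bound[OF this] have "Re (quad_form H (v0 + e *\<^sub>R z)) \<le> m * (norm (v0 + e *\<^sub>R z))\<^sup>2" .
    moreover have "Re (cinner z (H *v v0)) = a + m * Re (cinner z v0)"
      by (simp add: Hv0 cinner_add_right cinner_smult_right a_def Re_cinner_self)
    moreover have "Re (cinner v0 (H *v v0)) = m" by (simp add: m_def quad_form_cinner)
    ultimately show ?thesis
      unfolding quad_form_cinner expand_qf[OF h] expand_norm nv0 c_def
      by (simp add: algebra_simps)
  qed
  have "a = 0"
  proof (rule ccontr)
    assume "a \<noteq> 0"
    then have ap: "a > 0" by (simp add: a_def)
    define e where "e = a / (\<bar>c\<bar> + 1)"
    have ep: "e > 0" using ap by (simp add: e_def add_pos_nonneg)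
    have "e * c < a" using ap by (simp add: e_def field_simps) (smt (verit) mult_left_mono abs_ge_self mult_pos_pos ap)
    have "2 * a \<le> e * c" using key[of e] ep by (simp add: power2_eq_square mult.assoc)
    with \<open>e * c < a\<close> ap show False by simp
  qed
  then have "z = 0" by (simp add: a_def)
  then show ?thesis using nv0 v0W Hv0 by (auto simp: W_def)
qed



lemma spectral_family:
  fixes H :: "complex^'n^'n"
  assumes h: "hermitian H"
  shows "finite (S::'n set) \<Longrightarrow> \<exists>u d. (\<forall>i\<in>S. \<forall>j\<in>S. cinner (u i) (u j) = (if i = j then 1 else 0))
      \<and> (\<forall>i\<in>S. H *v u i = complex_of_real (d i) *s u i)"
proof (induction S rule: finite_induct)
  case empty then show ?case by auto
next
  case (insert a S)
  then obtain u d where on: "\<forall>i\<in>S. \<forall>j\<in>S. cinner (u i) (u j) = (if i = j then 1 else 0)"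
    and ev: "\<forall>i\<in>S. H *v u i = complex_of_real (d i) *s u i" by blast
  define T where "T = u ` S"
  have fT: "finite T" using insert by (simp add: T_def)
  have "card S < CARD('n)"
    using insert by (intro psubset_card_mono) auto
  then have cT: "card T < CARD('n)" unfolding T_def using card_image_le[OF insert(1), of u] by linarith
  obtain x where x: "x \<noteq> 0" "\<forall>t\<in>T. cinner t x = 0" using exists_orth[OF fT cT] by blast
  have inv: "\<forall>t\<in>T. cinner t (H *v v) = 0" if "\<forall>t\<in>T. cinner t v = 0" for v
  proof
    fix t assume "t \<in> T"
    then obtain i where i: "i \<in> S" "t = u i" by (auto simp: T_def)
    have "cinner (u i) (H *v v) = cinner (H *v u i) v" by (rule hermitian_cinner[OF h])
    also have "\<dots> = cnj (complex_of_real (d i)) * cinner (u i) v" using ev i by (simp add: cinner_smult_left)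
    also have "\<dots> = 0" using that i by (simp add: T_def)
    finally show "cinner t (H *v v) = 0" using i by simp
  qed
  obtain v m where v: "norm v = 1" "\<forall>t\<in>T. cinner t v = 0" "H *v v = complex_of_real m *s v"
    using max_eig[OF h fT inv x] by blast
  have vv: "cinner v v = 1" using v(1) by (simp add: cinner_self)
  have vu: "cinner (u j) v = 0" if "j \<in> S" for j using v(2) that by (simp add: T_def)
  have uv: "cinner v (u j) = 0" if "j \<in> S" for j using vu[OF that] by (subst cinner_commute) simp
  have aS: "a \<notin> S" by fact
  show ?case
    apply (rule exI[of _ "u(a := v)"], rule exI[of _ "d(a := m)"])
    using on ev vv vu uv v(3) aS by auto
qed

lemma spectral:
  fixes H :: "complex^'n^'n"
  assumes h: "hermitian H"
  shows "\<exists>U d. unitary U \<and> H = U ** real_diag d ** adjoint U"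
proof -
  obtain u :: "'n \<Rightarrow> complex^'n" and d :: "'n \<Rightarrow> real" where on: "\<forall>i j. cinner (u i) (u j) = (if i = j then 1 else 0)"
    and ev: "\<forall>i. H *v u i = complex_of_real (d i) *s u i"
    using spectral_family[OF h, of UNIV] by auto
  define U :: "complex^'n^'n" where "U = (\<chi> r i. u i $ r)"
  have 1: "adjoint U ** U = mat 1"
    using on by (simp add: vec_eq_iff matrix_matrix_mult_def U_def mat_def cinner_def)
  then have 2: "U ** adjoint U = mat 1" by (simp add: matrix_left_right_inverse)
  have 3: "H ** U = U ** real_diag d"
  proof -
    have "(H ** U) $ r $ i = (U ** real_diag d) $ r $ i" for r i
    proof -
      have "(H ** U) $ r $ i = (H *v u i) $ r"
        by (simp add: matrix_matrix_mult_def matrix_vector_mult_def U_def)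
      also have "\<dots> = complex_of_real (d i) * u i $ r" using ev by simp
      also have "\<dots> = (U ** real_diag d) $ r $ i"
        by (simp add: matrix_matrix_mult_def U_def real_diag_def if_distrib mult.commute cong: if_cong)
      finally show ?thesis .
    qed
    then show ?thesis by (simp add: vec_eq_iff)
  qed
  have "H = H ** (U ** adjoint U)" by (simp add: 2)
  also have "\<dots> = U ** real_diag d ** adjoint U" by (simp add: matrix_mul_assoc 3)
  finally show ?thesis using 1 2 unfolding unitary_def by blast
qed



lemma unitaryD: "unitary U \<Longrightarrow> adjoint U ** U = mat 1" "unitary U \<Longrightarrow> U ** adjoint U = mat 1"
  by (auto simp: unitary_def)

lemma if_mult0: "(if P then x else 0) * y = (if P then x * y else (0::complex))" by simp

lemma real_diag_mult: "real_diag a ** real_diag b = real_diag (\<lambda>i. a i * b i)"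
  by (simp add: vec_eq_iff matrix_matrix_mult_def real_diag_def if_mult0)

lemma real_diag_mv: "real_diag d *v c = (\<chi> i. complex_of_real (d i) * c $ i)"
  by (simp add: vec_eq_iff matrix_vector_mult_def real_diag_def if_mult0)

definition ev :: "'n \<Rightarrow> complex^'n" where "ev i = (\<chi> j. if j = i then 1 else 0)"

lemma mv_ev: "(A::complex^'n^'m) *v ev i = (\<chi> r. A $ r $ i)"
  by (simp add: vec_eq_iff matrix_vector_mult_def ev_def if_distrib[of "\<lambda>x. _ * x"] cong: if_cong)

lemma mat_eq_by_ev: "(\<And>i. (A::complex^'n^'m) *v ev i = B *v ev i) \<Longrightarrow> A = B"
  by (simp add: mv_ev vec_eq_iff)

lemma fc_eigen:
  fixes U :: "complex^'n^'n"
  assumes U: "unitary U" and M: "M = U ** real_diag d ** adjoint U"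
    and v: "M *v v = complex_of_real l *s v"
  shows "(U ** real_diag (\<lambda>i. f (d i)) ** adjoint U) *v v = complex_of_real (f l) *s v"
proof -
  define c where "c = adjoint U *v v"
  have Uc: "U *v c = v" by (simp add: c_def matrix_vector_mul_assoc unitaryD[OF U])
  have UU: "adjoint U *v (U *v x) = x" for x by (simp add: matrix_vector_mul_assoc unitaryD[OF U])
  have dec: "(U ** D ** adjoint U) *v v = U *v (D *v c)" for D
    by (simp add: c_def flip: matrix_vector_mul_assoc)
  have "U *v (real_diag d *v c) = complex_of_real l *s (U *v c)"
    using v dec[of "real_diag d"] Uc M by simp
  also have "\<dots> = U *v (complex_of_real l *s c)" by (simp add: matrix_vector_mult_smult')
  finally have "adjoint U *v (U *v (real_diag d *v c)) = adjoint U *v (U *v (complex_of_real l *s c))" by simp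
  then have "real_diag d *v c = complex_of_real l *s c" by (simp only: UU)
  then have dc: "complex_of_real (d i) * c $ i = complex_of_real l * c $ i" for i
    by (simp add: real_diag_mv vec_eq_iff)
  have "real_diag (\<lambda>i. f (d i)) *v c = complex_of_real (f l) *s c"
  proof -
    have "complex_of_real (f (d i)) * c $ i = complex_of_real (f l) * c $ i" for i
    proof (cases "c $ i = 0")
      case False
      then have "d i = l" using dc[of i] by simp
      then show ?thesis by simp
    qed simp
    then show ?thesis by (simp add: real_diag_mv vec_eq_iff)
  qed
  then show ?thesis
    by (simp add: dec matrix_vector_mult_smult' Uc)
qed

lemma col_eigen:
  fixes U :: "complex^'n^'n"
  assumes U: "unitary U"
  shows "(U ** real_diag d ** adjoint U) *v (U *v ev i) = complex_of_real (d i) *s (U *v ev i)"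
proof -
  have UU: "adjoint U *v (U *v x) = x" for x by (simp add: matrix_vector_mul_assoc unitaryD[OF U])
  have "(U ** real_diag d ** adjoint U) *v (U *v ev i) = U *v (real_diag d *v (adjoint U *v (U *v ev i)))"
    by (simp flip: matrix_vector_mul_assoc)
  also have "\<dots> = U *v (real_diag d *v ev i)" by (simp only: UU)
  also have "real_diag d *v ev i = complex_of_real (d i) *s ev i"
    by (simp add: real_diag_mv vec_eq_iff ev_def)
  finally show ?thesis by (simp add: matrix_vector_mult_smult')
qed

lemma fc_unique:
  fixes U U' :: "complex^'n^'n"
  assumes U: "unitary U" and U': "unitary U'"
    and eq: "U ** real_diag d ** adjoint U = U' ** real_diag d' ** adjoint U'"
  shows "U ** real_diag (\<lambda>i. f (d i)) ** adjoint U = U' ** real_diag (\<lambda>i. f (d' i)) ** adjoint U'"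
proof -
  let ?Y = "U' ** real_diag (\<lambda>i. f (d' i)) ** adjoint U'"
  let ?Z = "U ** real_diag (\<lambda>i. f (d i)) ** adjoint U"
  have "?Z ** U = ?Y ** U"
  proof (rule mat_eq_by_ev)
    fix i
    have e: "(U ** real_diag d ** adjoint U) *v (U *v ev i) = complex_of_real (d i) *s (U *v ev i)"
      by (rule col_eigen[OF U])
    have "?Z *v (U *v ev i) = complex_of_real (f (d i)) *s (U *v ev i)"
      by (rule fc_eigen[OF U refl e])
    moreover have "?Y *v (U *v ev i) = complex_of_real (f (d i)) *s (U *v ev i)"
      by (rule fc_eigen[OF U' eq e])
    ultimately show "(?Z ** U) *v ev i = (?Y ** U) *v ev i"
      by (simp only: matrix_vector_mul_assoc[symmetric])
  qed
  then have "?Z ** U ** adjoint U = ?Y ** U ** adjoint U" by simp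
  then show ?thesis by (simp only: matrix_mul_assoc[symmetric] unitaryD[OF U] matrix_mul_rid)
qed

lemma mat_powr_eq:
  assumes U: "unitary U" and M: "M = U ** real_diag d ** adjoint U"
  shows "mat_powr M r = U ** real_diag (\<lambda>i. d i powr r) ** adjoint U"
proof -
  have "\<exists>Y. \<exists>U d. unitary U \<and> M = U ** real_diag d ** adjoint U
       \<and> Y = U ** real_diag (\<lambda>i. d i powr r) ** adjoint U" using U M by blast
  from someI_ex[OF this] obtain U' d' where U': "unitary U'" "M = U' ** real_diag d' ** adjoint U'"
    and Y: "mat_powr M r = U' ** real_diag (\<lambda>i. d' i powr r) ** adjoint U'"
    unfolding mat_powr_def by blast
  have "U' ** real_diag d' ** adjoint U' = U ** real_diag d ** adjoint U" using M U'(2) by simp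
  from fc_unique[OF U'(1) U this, of "\<lambda>x. x powr r"] show ?thesis unfolding Y .
qed



lemma mat_mv: "mat k *v (v::complex^'n) = k *s v"
  by (simp add: vec_eq_iff matrix_vector_mult_def mat_def if_mult0)

lemma quad_form_mat: "quad_form (mat (complex_of_real c)) v = complex_of_real (c * (norm v)\<^sup>2)"
  by (simp add: quad_form_cinner mat_mv cinner_smult_right cinner_self)

lemma quad_form_add: "quad_form (P + R) v = quad_form P v + quad_form R v"
  by (simp add: quad_form_cinner matrix_vector_mult_add_rdistrib cinner_add_right)

lemma quad_form_diff: "quad_form (P - R) v = quad_form P v - quad_form (R::complex^'n^'n) v"
  by (simp add: quad_form_cinner matrix_vector_mult_diff_rdistrib cinner_diff_right)

lemma quad_form_cong: "quad_form (adjoint A ** M ** A) v = quad_form M (A *v v)"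
  by (simp add: quad_form_cinner cinner_adj flip: matrix_vector_mul_assoc)

lemma hermitian_add: "hermitian P \<Longrightarrow> hermitian R \<Longrightarrow> hermitian (P + R)"
  by (simp add: hermitian_def adjoint_add)
lemma hermitian_diff: "hermitian P \<Longrightarrow> hermitian R \<Longrightarrow> hermitian (P - R)"
  by (simp add: hermitian_def adjoint_diff)
lemma hermitian_mat: "hermitian (mat (complex_of_real c))"
  by (simp add: hermitian_def adjoint_mat_real)
lemma hermitian_cong: "hermitian M \<Longrightarrow> hermitian (adjoint A ** M ** A)"
  by (simp add: hermitian_def adjoint_mult matrix_mul_assoc)
lemma hermitian_fc: "hermitian (U ** real_diag d ** adjoint U)"
  by (simp add: hermitian_def adjoint_mult adjoint_real_diag matrix_mul_assoc)

lemma loewner_le_iff: "loewner_le P R \<longleftrightarrow> hermitian P \<and> hermitian R \<and>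
     (\<forall>v. Re (quad_form P v) \<le> Re (quad_form R v))"
  by (auto simp: loewner_le_def pos_semidef_def quad_form_diff hermitian_diff)

lemma loewner_trans: "loewner_le P R \<Longrightarrow> loewner_le R S \<Longrightarrow> loewner_le P S"
  unfolding loewner_le_iff by (meson order_trans)

lemma loewner_cong: "loewner_le P R \<Longrightarrow> loewner_le (adjoint A ** P ** A) (adjoint A ** R ** A)"
  unfolding loewner_le_iff by (simp add: hermitian_cong quad_form_cong)

lemma psd_iff: "pos_semidef M \<longleftrightarrow> hermitian M \<and> (\<forall>v. Re (quad_form M v) \<ge> 0)"
  by (simp add: pos_semidef_def)

lemma psd_cong: "pos_semidef M \<Longrightarrow> pos_semidef (adjoint A ** M ** A)"
  by (simp add: pos_semidef_def hermitian_cong quad_form_cong)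

lemma qf_fc:
  fixes U :: "complex^'n^'n"
  shows "Re (quad_form (U ** real_diag d ** adjoint U) v) =
     (\<Sum>i\<in>UNIV. d i * (cmod ((adjoint U *v v) $ i))\<^sup>2)"
proof -
  define c where "c = adjoint U *v v"
  have "quad_form (U ** real_diag d ** adjoint U) v = cinner c (real_diag d *v c)"
    by (simp add: quad_form_cinner c_def cinner_adj flip: matrix_vector_mul_assoc)
  also have "\<dots> = (\<Sum>i\<in>UNIV. complex_of_real (d i * (cmod (c $ i))\<^sup>2))"
    unfolding cinner_def real_diag_mv
    by (intro sum.cong refl) (simp add: complex_norm_square mult.commute mult.left_commute flip: of_real_power)
  finally show ?thesis by (simp add: c_def)
qed

lemma norm_unitary:
  assumes U: "unitary U"
  shows "(\<Sum>i\<in>UNIV. (cmod ((adjoint U *v v) $ i))\<^sup>2) = (norm v)\<^sup>2"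
proof -
  have "(\<Sum>i\<in>UNIV. (cmod ((adjoint U *v v) $ i))\<^sup>2) = Re (quad_form (U ** real_diag (\<lambda>i. 1) ** adjoint U) v)"
    by (simp add: qf_fc)
  also have "real_diag (\<lambda>i. 1) = (mat 1 :: complex^'n^'n)"
    by (simp add: vec_eq_iff real_diag_def mat_def)
  also have "Re (quad_form (U ** mat 1 ** adjoint U) v) = (norm v)\<^sup>2"
    using unitaryD[OF U] quad_form_mat[of 1 v] by simp
  finally show ?thesis .
qed

lemma Uev_nonzero:
  fixes U :: "complex^'n^'n"
  assumes U: "unitary U" shows "U *v ev i \<noteq> 0"
proof
  assume "U *v ev i = 0"
  then have "adjoint U *v (U *v ev i) = 0" by simp
  then have "ev i = (0::complex^'n)" by (simp add: matrix_vector_mul_assoc unitaryD[OF U])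
  then have "ev i $ i = (0::complex)" by simp
  then show False by (simp add: ev_def)
qed

lemma qf_col: "unitary (U::complex^'n^'n) \<Longrightarrow> Re (quad_form (U ** real_diag d ** adjoint U) (U *v ev i)) = d i * (norm (U *v ev i))\<^sup>2"
  by (simp add: quad_form_cinner col_eigen cinner_smult_right cinner_self)

lemma norm_Uev: fixes U :: "complex^'n^'n" assumes U: "unitary U" shows "norm (U *v ev i) = 1"
proof -
  have "(norm (U *v ev i))\<^sup>2 = (\<Sum>j\<in>UNIV. (cmod ((adjoint U *v (U *v ev i)) $ j))\<^sup>2)"
    by (simp add: norm_unitary[OF U])
  also have "\<dots> = (\<Sum>j\<in>UNIV. (cmod (ev i $ j))\<^sup>2)"
    by (simp add: matrix_vector_mul_assoc unitaryD[OF U])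
  also have "\<dots> = (\<Sum>j\<in>UNIV. if j = i then 1 else 0)"
    by (intro sum.cong refl) (simp add: ev_def)
  also have "\<dots> = 1" by simp
  finally show ?thesis using norm_ge_zero[of "U *v ev i"] by (auto simp: power2_eq_1_iff)
qed

lemma pd_decomp:
  assumes "pos_def X"
  shows "\<exists>U d. unitary U \<and> X = U ** real_diag d ** adjoint U \<and> (\<forall>i. d i > 0)"
proof -
  from assms have h: "hermitian X" by (simp add: pos_def_def)
  obtain U d where U: "unitary U" and X: "X = U ** real_diag d ** adjoint U"
    using spectral[OF h] by blast
  have "d i > 0" for i
  proof -
    have "Re (quad_form X (U *v ev i)) > 0" using assms Uev_nonzero[OF U] by (simp add: pos_def_def)
    then show ?thesis using qf_col[OF U] norm_Uev[OF U] X by simp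
  qed
  with U X show ?thesis by blast
qed

lemma fc_pd:
  fixes U :: "complex^'n^'n"
  assumes U: "unitary U" and d: "\<And>i. d i > 0"
  shows "pos_def (U ** real_diag d ** adjoint U)"
proof -
  have "Re (quad_form (U ** real_diag d ** adjoint U) v) > 0" if v: "v \<noteq> 0" for v
  proof -
    define c where "c = adjoint U *v v"
    have "U *v c = v" by (simp add: c_def matrix_vector_mul_assoc unitaryD[OF U])
    then have "c \<noteq> 0" using v by auto
    then obtain k where k: "c $ k \<noteq> 0" by (auto simp: vec_eq_iff)
    have "0 < d k * (cmod (c $ k))\<^sup>2" using k d[of k] by simp
    also have "\<dots> \<le> (\<Sum>i\<in>UNIV. d i * (cmod (c $ i))\<^sup>2)"
      by (rule member_le_sum) (auto intro: mult_nonneg_nonneg less_imp_le[OF d])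
    finally show ?thesis by (simp add: qf_fc c_def)
  qed
  then show ?thesis by (simp add: pos_def_def hermitian_fc)
qed

lemma fc_psd:
  fixes U :: "complex^'n^'n"
  assumes "\<And>i. d i \<ge> 0"
  shows "pos_semidef (U ** real_diag d ** adjoint U)"
  unfolding pos_semidef_def qf_fc using assms by (auto simp: hermitian_fc intro!: sum_nonneg)

lemma pd_psd: "pos_def M \<Longrightarrow> pos_semidef M"
  unfolding pos_def_def pos_semidef_def by (metis order_refl less_imp_le quad_form_cinner cinner_zero_right matrix_vector_mult_0_right zero_complex.simps(1))

lemma matrix_inv_eq:
  fixes A B :: "complex^'n^'n"
  assumes "A ** B = mat 1"
  shows "matrix_inv A = B"
proof -
  have BA: "B ** A = mat 1" using assms by (simp add: matrix_left_right_inverse)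
  have "\<exists>A'. A ** A' = mat 1 \<and> A' ** A = mat 1" using assms BA by blast
  from someI_ex[OF this] have C: "A ** matrix_inv A = mat 1" "matrix_inv A ** A = mat 1"
    unfolding matrix_inv_def by auto
  have "matrix_inv A = matrix_inv A ** (A ** B)" by (simp add: assms)
  also have "\<dots> = B" by (simp add: matrix_mul_assoc C)
  finally show ?thesis .
qed

lemma matrix_inv_inv:
  fixes A :: "complex^'n^'n"
  assumes "invertible A"
  shows "A ** matrix_inv A = mat 1" "matrix_inv A ** A = mat 1"
proof -
  obtain B where "A ** B = mat 1" using assms by (auto simp: invertible_def)
  then show "A ** matrix_inv A = mat 1" "matrix_inv A ** A = mat 1"
    using matrix_inv_eq[of A B] by (auto simp: matrix_left_right_inverse)
qed

lemma fc_mult: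
  fixes U :: "complex^'n^'n"
  assumes U: "unitary U"
  shows "(U ** real_diag a ** adjoint U) ** (U ** real_diag b ** adjoint U) = U ** real_diag (\<lambda>i. a i * b i) ** adjoint U"
proof -
  have "(U ** real_diag a ** adjoint U) ** (U ** real_diag b ** adjoint U)
     = U ** real_diag a ** (adjoint U ** U) ** real_diag b ** adjoint U"
    by (simp add: matrix_mul_assoc)
  also have "\<dots> = U ** (real_diag a ** real_diag b) ** adjoint U"
    by (simp add: unitaryD[OF U] matrix_mul_assoc)
  finally show ?thesis by (simp add: real_diag_mult)
qed

lemma fc_one: "unitary (U::complex^'n^'n) \<Longrightarrow> U ** real_diag (\<lambda>i. 1) ** adjoint U = mat 1"
proof -
  assume U: "unitary U"
  have "real_diag (\<lambda>i. 1) = (mat 1 :: complex^'n^'n)"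
    by (simp add: vec_eq_iff real_diag_def mat_def)
  then show ?thesis using unitaryD[OF U] by simp
qed

lemma fc_inv_prod:
  fixes U :: "complex^'n^'n"
  assumes U: "unitary U" and d: "\<And>i. d i > 0"
  shows "(U ** real_diag d ** adjoint U) ** (U ** real_diag (\<lambda>i. 1 / d i) ** adjoint U) = mat 1"
proof -
  have "(\<lambda>i. d i * (1 / d i)) = (\<lambda>i. 1)" using d by (simp add: fun_eq_iff) (metis less_irrefl)
  then show ?thesis by (simp add: fc_mult[OF U] fc_one[OF U])
qed

lemma fc_inv:
  fixes U :: "complex^'n^'n"
  assumes U: "unitary U" and d: "\<And>i. d i > 0"
  shows "matrix_inv (U ** real_diag d ** adjoint U) = U ** real_diag (\<lambda>i. 1 / d i) ** adjoint U"
  by (rule matrix_inv_eq[OF fc_inv_prod[OF U d]])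

lemma pd_inv: "pos_def A \<Longrightarrow> pos_def (matrix_inv A) \<and> A ** matrix_inv A = mat 1 \<and> matrix_inv A ** A = mat 1"
proof -
  assume "pos_def A"
  then obtain U d where U: "unitary U" and A: "A = U ** real_diag d ** adjoint U" and d: "\<And>i. d i > 0"
    using pd_decomp by blast
  have I: "matrix_inv A = U ** real_diag (\<lambda>i. 1 / d i) ** adjoint U" using fc_inv[OF U d] A by simp
  have "A ** matrix_inv A = mat 1"
    unfolding I unfolding A by (rule fc_inv_prod[OF U d])
  then show ?thesis using fc_pd[OF U, of "\<lambda>i. 1 / d i"] d I
    by (simp add: matrix_left_right_inverse)
qed

lemma inv_antitone:
  assumes A: "pos_def A" and B: "pos_def B" and le: "loewner_le A B"
  shows "loewner_le (matrix_inv B) (matrix_inv A)"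
proof -
  obtain Ai: "pos_def (matrix_inv A)" "A ** matrix_inv A = mat 1" "matrix_inv A ** A = mat 1"
    using pd_inv[OF A] by blast
  obtain Bi: "pos_def (matrix_inv B)" "B ** matrix_inv B = mat 1" "matrix_inv B ** B = mat 1"
    using pd_inv[OF B] by blast
  have hA: "hermitian A" and hB: "hermitian B" and hAi: "hermitian (matrix_inv A)" and hBi: "hermitian (matrix_inv B)"
    using A B Ai Bi by (auto simp: pos_def_def)
  have qle: "Re (quad_form A w) \<le> Re (quad_form B w)" for w using le by (simp add: loewner_le_iff)
  have "Re (quad_form (matrix_inv B) v) \<le> Re (quad_form (matrix_inv A) v)" for v
  proof -
    define w where "w = matrix_inv B *v v"
    have Bw: "B *v w = v" by (simp add: w_def matrix_vector_mul_assoc Bi(2))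
    have e1: "Re (quad_form (matrix_inv B) v) = 2 * Re (cinner w v) - Re (quad_form B w)"
    proof -
      have "cinner w v = cinner v w"
        unfolding w_def using hermitian_cinner[OF hBi, of v v] by (metis cinner_commute)
      moreover have "quad_form B w = cinner w v" by (simp add: quad_form_cinner Bw)
      ultimately show ?thesis by (simp add: quad_form_cinner w_def)
    qed
    define y where "y = w - matrix_inv A *v v"
    have "0 \<le> Re (quad_form A y)" using pd_psd[OF A] by (simp add: pos_semidef_def)
    also have "quad_form A y = quad_form A w - cinner w v - cinner v w + quad_form (matrix_inv A) v"
    proof -
      have AA: "A *v (matrix_inv A *v v) = v" by (simp add: matrix_vector_mul_assoc Ai(2))
      have c1: "cinner (matrix_inv A *v v) (A *v w) = cinner v w"
        using hermitian_cinner[OF hA, of "matrix_inv A *v v" w] AA by simp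
      have c2: "cinner (matrix_inv A *v v) v = cinner v (matrix_inv A *v v)"
        using hermitian_cinner[OF hAi, of v v] by simp
      show ?thesis unfolding y_def quad_form_cinner
        by (simp add: matrix_vector_mult_diff' AA cinner_diff_left cinner_diff_right c1 c2)
    qed
    finally have "0 \<le> Re (quad_form A w) - 2 * Re (cinner w v) + Re (quad_form (matrix_inv A) v)"
      using cinner_commute[of v w] by simp
    with e1 qle[of w] show ?thesis by simp
  qed
  then show ?thesis using hAi hBi by (simp add: loewner_le_iff)
qed



definition hr :: "real \<Rightarrow> real \<Rightarrow> real" where
  "hr r u = (if 0 < u then u powr (r - 1) / (1 + u) else 0)"
definition gr :: "real \<Rightarrow> real \<Rightarrow> real \<Rightarrow> real" where
  "gr r x u = (if 0 < u then u powr (r - 1) * (x / (x + u)) else 0)"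

lemma hr_meas: "(\<lambda>u. ennreal (hr r u)) \<in> borel_measurable borel"
  unfolding hr_def by measurable

lemma gr_meas: "(\<lambda>u. ennreal (gr r x u)) \<in> borel_measurable borel"
  unfolding gr_def by measurable

lemma gr_nonneg: "x > 0 \<Longrightarrow> gr r x u \<ge> 0"
  by (simp add: gr_def)

lemma scale_integral:
  assumes x: "x > 0"
  shows "(\<integral>\<^sup>+u. ennreal (gr r x u) \<partial>lborel) = ennreal (x powr r) * (\<integral>\<^sup>+u. ennreal (hr r u) \<partial>lborel)"
proof -
  have "(\<integral>\<^sup>+u. ennreal (gr r x u) \<partial>lborel) = ennreal \<bar>x\<bar> * (\<integral>\<^sup>+u. ennreal (gr r x (0 + x * u)) \<partial>lborel)"
    using nn_integral_real_affine[OF gr_meas[of r x], of x 0] x by simp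
  also have "(\<lambda>u. ennreal (gr r x (0 + x * u))) = (\<lambda>u. ennreal (x powr (r - 1)) * ennreal (hr r u))"
  proof
    fix u
    show "ennreal (gr r x (0 + x * u)) = ennreal (x powr (r - 1)) * ennreal (hr r u)"
    proof (cases "u > 0")
      case True
      have "x + x * u > 0" using True x by (simp add: add_pos_pos)
      then have q: "x / (x + x * u) = 1 / (1 + u)" using True x by (simp add: field_simps)
      have "gr r x (0 + x * u) = (x * u) powr (r - 1) * (1 / (1 + u))"
        using True x q by (simp add: gr_def)
      also have "\<dots> = x powr (r - 1) * hr r u"
        using True x by (simp add: hr_def powr_mult)
      finally have "gr r x (0 + x * u) = x powr (r - 1) * hr r u" .
      moreover have "hr r u \<ge> 0" using True by (simp add: hr_def)
      ultimately show ?thesis by (simp add: ennreal_mult)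
    next
      case False
      then have "\<not> 0 < x * u" using x by (simp add: zero_less_mult_iff)
      then show ?thesis using False by (simp add: gr_def hr_def)
    qed
  qed
  also have "(\<integral>\<^sup>+u. ennreal (x powr (r - 1)) * ennreal (hr r u) \<partial>lborel) = ennreal (x powr (r - 1)) * (\<integral>\<^sup>+u. ennreal (hr r u) \<partial>lborel)"
    by (rule nn_integral_cmult) (use hr_meas in simp)
  also have "ennreal \<bar>x\<bar> * (ennreal (x powr (r - 1)) * (\<integral>\<^sup>+u. ennreal (hr r u) \<partial>lborel)) = ennreal (x * x powr (r - 1)) * (\<integral>\<^sup>+u. ennreal (hr r u) \<partial>lborel)"
    using x by (simp add: ennreal_mult'' mult.assoc)
  also have "x * x powr (r - 1) = x powr r" using x by (simp add: powr_mult_base)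
  finally show ?thesis .
qed

lemma C_fin:
  assumes r: "0 < r" "r < 1"
  shows "(\<integral>\<^sup>+u. ennreal (hr r u) \<partial>lborel) < \<infinity>"
proof -
  have i1: "(\<integral>\<^sup>+u. ennreal (indicator {0..1} u * u powr (r - 1)) \<partial>lborel) = ennreal (1 powr (r - 1 + 1) / (r - 1 + 1))"
    by (rule nn_integral_has_integral_lebesgue) (use has_integral_powr_from_0[of "r-1" 1] r in auto)
  have i2: "(\<integral>\<^sup>+u. ennreal (indicator {1..} u * u powr (r - 2)) \<partial>lborel) = ennreal (-(1 powr (r - 2 + 1)) / (r - 2 + 1))"
    by (rule nn_integral_has_integral_lebesgue) (use has_integral_powr_to_inf[of "r-2" 1] r in auto)
  have "(\<integral>\<^sup>+u. ennreal (hr r u) \<partial>lborel) \<le>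
     (\<integral>\<^sup>+u. ennreal (indicator {0..1} u * u powr (r - 1)) + ennreal (indicator {1..} u * u powr (r - 2)) \<partial>lborel)"
  proof (rule nn_integral_mono)
    fix u :: real
    show "ennreal (hr r u) \<le> ennreal (indicator {0..1} u * u powr (r - 1)) + ennreal (indicator {1..} u * u powr (r - 2))"
    proof (cases "0 < u")
      case False then show ?thesis by (simp add: hr_def)
    next
      case True
      show ?thesis
      proof (cases "u \<le> 1")
        case True
        have "hr r u \<le> u powr (r - 1)" using \<open>0 < u\<close>
          by (simp add: hr_def divide_le_eq mult_le_cancel_left1)
        then have "ennreal (hr r u) \<le> ennreal (indicator {0..1} u * u powr (r - 1))"
          using True \<open>0 < u\<close> by (intro ennreal_leI) simp
        then show ?thesis by (rule order_trans) simp
      next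
        case False
        have "hr r u = u powr (r - 1) / (1 + u)" using \<open>0 < u\<close> by (simp add: hr_def)
        also have "\<dots> \<le> u powr (r - 1) / u" using \<open>0 < u\<close> by (intro divide_left_mono) auto
        also have "\<dots> = u powr (r - 2)"
        proof -
          have "u powr (r - 2) = u powr ((r - 1) - 1)" by simp
          also have "\<dots> = u powr (r - 1) / u powr 1" by (rule powr_diff)
          finally show ?thesis using \<open>0 < u\<close> by simp
        qed
        finally have "ennreal (hr r u) \<le> ennreal (indicator {1..} u * u powr (r - 2))"
          using False by (intro ennreal_leI) simp
        then show ?thesis by (rule order_trans) simp
      qed
    qed
  qed
  also have "\<dots> = (\<integral>\<^sup>+u. ennreal (indicator {0..1} u * u powr (r - 1)) \<partial>lborel) + (\<integral>\<^sup>+u. ennreal (indicator {1..} u * u powr (r - 2)) \<partial>lborel)"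
    by (rule nn_integral_add) measurable
  also have "\<dots> < \<infinity>" unfolding i1 i2 by simp
  finally show ?thesis .
qed

lemma C_pos:
  assumes r: "0 < r" "r < 1"
  shows "(\<integral>\<^sup>+u. ennreal (hr r u) \<partial>lborel) > 0"
proof -
  have "(\<integral>\<^sup>+(u::real). ennreal (1/6) * indicator {1..2} u \<partial>lborel) \<le> (\<integral>\<^sup>+u. ennreal (hr r u) \<partial>lborel)"
  proof (rule nn_integral_mono)
    fix u :: real
    show "ennreal (1/6) * indicator {1..2} u \<le> ennreal (hr r u)"
    proof (cases "u \<in> {1..2}")
      case True
      then have u: "1 \<le> u" "u \<le> 2" by auto
      have "u powr (r - 1) \<ge> u powr (-1)" using u r by (intro powr_mono) auto
      moreover have "u powr (-1) = 1 / u" using u by (simp add: powr_minus_divide)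
      moreover have "1 / u \<ge> 1/2" using u by (simp add: field_simps)
      ultimately have a: "u powr (r - 1) \<ge> 1/2" by linarith
      have "1/6 \<le> (1/2) / (1 + u)" using u by (simp add: field_simps)
      also have "\<dots> \<le> u powr (r - 1) / (1 + u)" using a u by (intro divide_right_mono) auto
      finally have "1/6 \<le> hr r u" using u by (simp add: hr_def)
      then show ?thesis using True by (simp add: ennreal_leI)
    qed simp
  qed
  moreover have "(\<integral>\<^sup>+(u::real). ennreal (1/6) * indicator {1..2} u \<partial>lborel) = ennreal (1/6)"
    by (simp add: nn_integral_cmult_indicator)
  ultimately show ?thesis by (metis ennreal_less_zero_iff order_less_le_trans zero_less_divide_1_iff zero_less_numeral)
qed



lemma matrix_add_rdistrib': "((A::complex^'n^'m) + B) ** C = A ** C + B ** C"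
  by (simp add: vec_eq_iff matrix_matrix_mult_def distrib_right sum.distrib)

lemma mult_if0': "x * (if P then y else 0) = (if P then x * y else (0::complex))" by simp

lemma mat_comm: "(A::complex^'n^'n) ** mat k = mat k ** A"
proof -
  have "(A ** mat k) $ i $ j = A $ i $ j * k" for i j
    by (simp add: matrix_matrix_mult_def mat_def mult_if0')
  moreover have "(mat k ** A) $ i $ j = A $ i $ j * k" for i j
    by (simp add: matrix_matrix_mult_def mat_def if_mult0 mult_if0' mult.commute)
  ultimately show ?thesis by (simp add: vec_eq_iff)
qed

lemma fc_add_mat:
  fixes U :: "complex^'n^'n"
  assumes U: "unitary U"
  shows "U ** real_diag a ** adjoint U + mat (complex_of_real c) = U ** real_diag (\<lambda>i. a i + c) ** adjoint U"
proof -
  have "real_diag (\<lambda>i. a i + c) = real_diag a + (mat (complex_of_real c) :: complex^'n^'n)"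
    by (simp add: vec_eq_iff real_diag_def mat_def)
  then have "U ** real_diag (\<lambda>i. a i + c) ** adjoint U
      = U ** real_diag a ** adjoint U + U ** mat (complex_of_real c) ** adjoint U"
    by (simp add: matrix_add_ldistrib matrix_add_rdistrib')
  also have "U ** mat (complex_of_real c) ** adjoint U = mat (complex_of_real c) ** U ** adjoint U"
    by (simp only: mat_comm)
  also have "\<dots> = mat (complex_of_real c) ** (U ** adjoint U)"
    by (simp only: matrix_mul_assoc)
  also have "\<dots> = mat (complex_of_real c)" by (simp add: unitaryD[OF U])
  finally show ?thesis by simp
qed

definition Cr :: "real \<Rightarrow> ennreal" where "Cr r = (\<integral>\<^sup>+u. ennreal (hr r u) \<partial>lborel)"

lemma integral_rep:
  fixes U :: "complex^'n^'n"
  assumes U: "unitary U" and a: "\<And>i. a i > 0"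
  shows "ennreal (Re (quad_form (U ** real_diag (\<lambda>i. a i powr r) ** adjoint U) v)) * Cr r =
    (\<integral>\<^sup>+l. ennreal (if 0 < l then l powr (r - 1) * ((norm v)\<^sup>2 - l *
        Re (quad_form (matrix_inv (U ** real_diag a ** adjoint U + mat (complex_of_real l))) v)) else 0) \<partial>lborel)"
proof -
  define w where "w i = (cmod ((adjoint U *v v) $ i))\<^sup>2" for i
  have w0: "w i \<ge> 0" for i by (simp add: w_def)
  have "ennreal (Re (quad_form (U ** real_diag (\<lambda>i. a i powr r) ** adjoint U) v)) * Cr r
      = ennreal (\<Sum>i\<in>UNIV. w i * a i powr r) * Cr r"
    by (simp add: qf_fc w_def mult.commute)
  also have "\<dots> = (\<Sum>i\<in>UNIV. ennreal (w i) * (ennreal (a i powr r) * Cr r))"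
    by (simp add: sum_ennreal[symmetric] w0 sum_distrib_right ennreal_mult mult.assoc)
  also have "\<dots> = (\<Sum>i\<in>UNIV. ennreal (w i) * (\<integral>\<^sup>+l. ennreal (gr r (a i) l) \<partial>lborel))"
    by (simp add: Cr_def scale_integral[OF a])
  also have "\<dots> = (\<Sum>i\<in>UNIV. (\<integral>\<^sup>+l. ennreal (w i) * ennreal (gr r (a i) l) \<partial>lborel))"
    by (intro sum.cong refl nn_integral_cmult[symmetric]) (use gr_meas in simp)
  also have "\<dots> = (\<integral>\<^sup>+l. (\<Sum>i\<in>UNIV. ennreal (w i) * ennreal (gr r (a i) l)) \<partial>lborel)"
    by (rule nn_integral_sum[symmetric]) (use gr_meas in simp)
  also have "\<dots> = (\<integral>\<^sup>+l. ennreal (\<Sum>i\<in>UNIV. w i * gr r (a i) l) \<partial>lborel)"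
    by (intro nn_integral_cong) (simp add: ennreal_mult w0 gr_nonneg[OF a] sum_ennreal[symmetric] mult_nonneg_nonneg)
  also have "\<dots> = (\<integral>\<^sup>+l. ennreal (if 0 < l then l powr (r - 1) * ((norm v)\<^sup>2 - l *
        Re (quad_form (matrix_inv (U ** real_diag a ** adjoint U + mat (complex_of_real l))) v)) else 0) \<partial>lborel)"
  proof (intro nn_integral_cong arg_cong[where f = ennreal])
    fix l :: real
    show "(\<Sum>i\<in>UNIV. w i * gr r (a i) l) = (if 0 < l then l powr (r - 1) * ((norm v)\<^sup>2 - l *
        Re (quad_form (matrix_inv (U ** real_diag a ** adjoint U + mat (complex_of_real l))) v)) else 0)"
    proof (cases "0 < l")
      case False then show ?thesis by (simp add: gr_def)
    next
      case True
      have al: "a i + l > 0" for i using a[of i] True by simp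
      have inv: "matrix_inv (U ** real_diag a ** adjoint U + mat (complex_of_real l))
          = U ** real_diag (\<lambda>i. 1 / (a i + l)) ** adjoint U"
        using fc_inv[OF U al] by (simp add: fc_add_mat[OF U])
      have nv: "(norm v)\<^sup>2 = (\<Sum>i\<in>UNIV. w i)" using norm_unitary[OF U, of v] by (simp add: w_def)
      have trm: "w i * gr r (a i) l = l powr (r - 1) * (w i - l * (1 / (a i + l) * w i))" for i
      proof -
        have "w i * gr r (a i) l = l powr (r - 1) * (w i * (a i / (a i + l)))" using True by (simp add: gr_def)
        also have "w i * (a i / (a i + l)) = w i - l * (1 / (a i + l) * w i)"
          using al[of i] by (simp add: field_simps)
        finally show ?thesis .
      qed
      have "(\<Sum>i\<in>UNIV. w i * gr r (a i) l) = l powr (r - 1) * ((\<Sum>i\<in>UNIV. w i) - l * (\<Sum>i\<in>UNIV. 1 / (a i + l) * w i))"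
        unfolding trm by (simp only: sum_distrib_left[symmetric] sum_subtractf)
      then show ?thesis using True by (simp add: inv qf_fc nv w_def)
    qed
  qed
  finally show ?thesis .
qed

lemma LH:
  fixes A B :: "complex^'n^'n"
  assumes A: "pos_def A" and B: "pos_def B" and le: "loewner_le A B" and r: "0 < r" "r \<le> 1"
  shows "loewner_le (mat_powr A r) (mat_powr B r)"
proof -
  obtain U a where U: "unitary U" and Ad: "A = U ** real_diag a ** adjoint U" and a: "\<And>i. a i > 0"
    using pd_decomp[OF A] by blast
  obtain V b where V: "unitary V" and Bd: "B = V ** real_diag b ** adjoint V" and b: "\<And>i. b i > 0"
    using pd_decomp[OF B] by blast
  have Ar: "mat_powr A r = U ** real_diag (\<lambda>i. a i powr r) ** adjoint U" by (rule mat_powr_eq[OF U Ad])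
  have Br: "mat_powr B r = V ** real_diag (\<lambda>i. b i powr r) ** adjoint V" by (rule mat_powr_eq[OF V Bd])
  show ?thesis
  proof (cases "r = 1")
    case True
    have "(\<lambda>i. a i powr r) = a" "(\<lambda>i. b i powr r) = b" using a b True by (auto simp: fun_eq_iff less_imp_le)
    then show ?thesis using le Ar Br Ad Bd by simp
  next
    case False
    then have r1: "r < 1" using r by simp
    have Cpos: "Cr r \<noteq> 0" and Cfin: "Cr r \<noteq> top"
      using C_pos[OF r(1) r1] C_fin[OF r(1) r1] by (auto simp: Cr_def)
    have "Re (quad_form (mat_powr A r) v) \<le> Re (quad_form (mat_powr B r) v)" for v
    proof -
      have pt: "ennreal (if 0 < l then l powr (r - 1) * ((norm v)\<^sup>2 - l *
            Re (quad_form (matrix_inv (A + mat (complex_of_real l))) v)) else 0)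
          \<le> ennreal (if 0 < l then l powr (r - 1) * ((norm v)\<^sup>2 - l *
            Re (quad_form (matrix_inv (B + mat (complex_of_real l))) v)) else 0)" for l
      proof (cases "0 < l")
        case True
        have al: "a i + l > 0" "b i + l > 0" for i using a[of i] b[of i] True by auto
        have pA: "pos_def (A + mat (complex_of_real l))"
          using fc_pd[OF U al(1)] by (simp add: Ad fc_add_mat[OF U])
        have pB: "pos_def (B + mat (complex_of_real l))"
          using fc_pd[OF V al(2)] by (simp add: Bd fc_add_mat[OF V])
        have "loewner_le (A + mat (complex_of_real l)) (B + mat (complex_of_real l))"
          using le by (simp add: loewner_le_iff quad_form_add hermitian_add hermitian_mat)
        from inv_antitone[OF pA pB this]
        have "Re (quad_form (matrix_inv (B + mat (complex_of_real l))) v) \<le> Re (quad_form (matrix_inv (A + mat (complex_of_real l))) v)"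
          by (simp add: loewner_le_iff)
        then have "l powr (r - 1) * ((norm v)\<^sup>2 - l * Re (quad_form (matrix_inv (A + mat (complex_of_real l))) v))
           \<le> l powr (r - 1) * ((norm v)\<^sup>2 - l * Re (quad_form (matrix_inv (B + mat (complex_of_real l))) v))"
          using True by (intro mult_left_mono) auto
        then show ?thesis using True by (simp add: ennreal_leI)
      qed simp
      have iA: "ennreal (Re (quad_form (mat_powr A r) v)) * Cr r = (\<integral>\<^sup>+l. ennreal (if 0 < l then l powr (r - 1) * ((norm v)\<^sup>2 - l *
            Re (quad_form (matrix_inv (A + mat (complex_of_real l))) v)) else 0) \<partial>lborel)"
        unfolding Ar using integral_rep[of U a r v, OF U a] by (simp only: Ad[symmetric])
      have iB: "ennreal (Re (quad_form (mat_powr B r) v)) * Cr r = (\<integral>\<^sup>+l. ennreal (if 0 < l then l powr (r - 1) * ((norm v)\<^sup>2 - l *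
            Re (quad_form (matrix_inv (B + mat (complex_of_real l))) v)) else 0) \<partial>lborel)"
        unfolding Br using integral_rep[of V b r v, OF V b] by (simp only: Bd[symmetric])
      have "Cr r * ennreal (Re (quad_form (mat_powr A r) v)) \<le> Cr r * ennreal (Re (quad_form (mat_powr B r) v))"
        by (simp only: mult.commute[of "Cr r"] iA iB) (rule nn_integral_mono[OF pt])
      then have "ennreal (Re (quad_form (mat_powr A r) v)) \<le> ennreal (Re (quad_form (mat_powr B r) v))"
        using ennreal_mult_le_mult_iff[OF Cpos Cfin] by simp
      moreover have "Re (quad_form (mat_powr B r) v) \<ge> 0"
        unfolding Br using fc_psd[of "\<lambda>i. b i powr r" V] by (simp add: pos_semidef_def)
      ultimately show ?thesis by simp
    qed
    then show ?thesis by (simp add: loewner_le_iff Ar Br hermitian_fc)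
  qed
qed



lemma adjoint_mat_one: "adjoint (mat 1 :: complex^'n^'n) = mat 1"
  by (simp add: vec_eq_iff mat_def)

lemma fc_ge_const:
  fixes U :: "complex^'n^'n"
  assumes U: "unitary U" and d: "\<And>i. c \<le> d i"
  shows "loewner_le (mat (complex_of_real c)) (U ** real_diag d ** adjoint U)"
proof -
  have "Re (quad_form (mat (complex_of_real c)) v) \<le> Re (quad_form (U ** real_diag d ** adjoint U) v)" for v
  proof -
    have "Re (quad_form (mat (complex_of_real c)) v) = (\<Sum>i\<in>UNIV. c * (cmod ((adjoint U *v v) $ i))\<^sup>2)"
      by (simp add: quad_form_mat norm_unitary[OF U] sum_distrib_left[symmetric])
    also have "\<dots> \<le> (\<Sum>i\<in>UNIV. d i * (cmod ((adjoint U *v v) $ i))\<^sup>2)"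
      by (intro sum_mono mult_right_mono d) simp
    finally show ?thesis by (simp add: qf_fc)
  qed
  then show ?thesis by (simp add: loewner_le_iff hermitian_mat hermitian_fc)
qed

lemma eig_set:
  fixes V :: "complex^'n^'n"
  assumes V: "unitary V" and M: "M = V ** real_diag e ** adjoint V"
  shows "{x::real. \<exists>v. v \<noteq> 0 \<and> M *v v = complex_of_real x *s v} = range e"
proof
  show "range e \<subseteq> {x. \<exists>v. v \<noteq> 0 \<and> M *v v = complex_of_real x *s v}"
    using col_eigen[OF V] Uev_nonzero[OF V] M by blast
  show "{x. \<exists>v. v \<noteq> 0 \<and> M *v v = complex_of_real x *s v} \<subseteq> range e"
  proof
    fix x assume "x \<in> {x. \<exists>v. v \<noteq> 0 \<and> M *v v = complex_of_real x *s v}"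
    then obtain v where v: "v \<noteq> 0" "M *v v = complex_of_real x *s v" by blast
    show "x \<in> range e"
    proof (rule ccontr)
      assume nx: "x \<notin> range e"
      define f where "f y = (if y = x then 1 else (0::real))" for y
      have "(V ** real_diag (\<lambda>i. f (e i)) ** adjoint V) *v v = complex_of_real (f x) *s v"
        by (rule fc_eigen[OF V M v(2)])
      moreover have "(\<lambda>i. f (e i)) = (\<lambda>i. 0)" using nx by (auto simp: f_def fun_eq_iff)
      moreover have "real_diag (\<lambda>i. 0) = (0 :: complex^'n^'n)" by (simp add: vec_eq_iff real_diag_def)
      ultimately have "(0::complex^'n) = v"
        by (simp add: f_def matrix_vector_mult_def vec_eq_iff matrix_matrix_mult_def)
      with v(1) show False by simp
    qed
  qed
qed

lemma lambda_min_le: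
  fixes V :: "complex^'n^'n"
  assumes V: "unitary V" and M: "M = V ** real_diag e ** adjoint V"
  shows "lambda_min M \<in> range e" "\<And>i. lambda_min M \<le> e i"
proof -
  have L: "lambda_min M = Min (range e)" unfolding lambda_min_def eig_set[OF V M] ..
  show "lambda_min M \<in> range e" unfolding L by (rule Min_in) auto
  show "\<And>i. lambda_min M \<le> e i" unfolding L by (rule Min_le) auto
qed

lemma lower_bound:
  fixes E Q X :: "complex^'n^'n"
  assumes t: "t > 0" and E: "invertible E" and Q: "pos_def Q" and X: "pos_def X"
    and le: "loewner_le (adjoint E ** mat_powr X (-t) ** E) Q"
  shows "loewner_le (mat (complex_of_real (lambda_min (E ** matrix_inv Q ** adjoint E) powr (1/t)))) X"
proof -
  obtain U d where U: "unitary U" and Xd: "X = U ** real_diag d ** adjoint U" and d: "\<And>i. d i > 0"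
    using pd_decomp[OF X] by blast
  define Ei where "Ei = matrix_inv E"
  have EEi: "E ** Ei = mat 1" "Ei ** E = mat 1" using matrix_inv_inv[OF E] by (auto simp: Ei_def)
  define Xmt where "Xmt = U ** real_diag (\<lambda>i. d i powr (-t)) ** adjoint U"
  have Xmt_eq: "mat_powr X (-t) = Xmt" unfolding Xmt_def by (rule mat_powr_eq[OF U Xd])
  have dnz: "d i \<noteq> 0" for i using d[of i] by simp
  have pXmt: "pos_def Xmt" unfolding Xmt_def by (rule fc_pd[OF U]) (simp add: dnz)
  define R where "R = adjoint Ei ** Q ** Ei"
  have pR: "pos_def R"
  proof -
    have "Re (quad_form R v) > 0" if "v \<noteq> 0" for v
    proof -
      have "Ei *v v \<noteq> 0"
      proof
        assume "Ei *v v = 0"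
        then have "E *v (Ei *v v) = 0" by simp
        then show False using that by (simp add: matrix_vector_mul_assoc EEi)
      qed
      then show ?thesis using Q by (simp add: R_def quad_form_cong pos_def_def)
    qed
    then show ?thesis using Q by (simp add: pos_def_def R_def hermitian_cong)
  qed
  have "adjoint Ei ** (adjoint E ** Xmt ** E) ** Ei = adjoint Ei ** adjoint E ** Xmt ** (E ** Ei)"
    by (simp only: matrix_mul_assoc)
  also have "\<dots> = Xmt" by (simp add: adjoint_mult[symmetric] EEi adjoint_mat_one)
  finally have c1: "adjoint Ei ** (adjoint E ** Xmt ** E) ** Ei = Xmt" .
  have le2: "loewner_le Xmt R"
    using loewner_cong[OF le, of Ei] unfolding R_def Xmt_eq c1 .
  have le3: "loewner_le (matrix_inv R) (matrix_inv Xmt)" by (rule inv_antitone[OF pXmt pR le2])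
  define Xt where "Xt = U ** real_diag (\<lambda>i. d i powr t) ** adjoint U"
  have "matrix_inv Xmt = U ** real_diag (\<lambda>i. 1 / d i powr (-t)) ** adjoint U"
    unfolding Xmt_def by (rule fc_inv[OF U]) (simp add: dnz)
  also have "(\<lambda>i. 1 / d i powr (-t)) = (\<lambda>i. d i powr t)" by (simp add: fun_eq_iff powr_minus divide_inverse)
  finally have iXmt: "matrix_inv Xmt = Xt" unfolding Xt_def .
  define M where "M = E ** matrix_inv Q ** adjoint E"
  obtain Qi: "Q ** matrix_inv Q = mat 1" using pd_inv[OF Q] by blast
  have "R ** M = adjoint Ei ** Q ** (Ei ** E) ** matrix_inv Q ** adjoint E"
    by (simp only: R_def M_def matrix_mul_assoc)
  also have "\<dots> = adjoint Ei ** (Q ** matrix_inv Q) ** adjoint E"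
    by (simp add: EEi matrix_mul_assoc)
  also have "\<dots> = adjoint (E ** Ei)" by (simp add: Qi adjoint_mult)
  also have "\<dots> = mat 1" by (simp add: EEi adjoint_mat_one)
  finally have iR: "matrix_inv R = M" by (rule matrix_inv_eq)
  have pM: "pos_def M" using pd_inv[OF pR] iR by simp
  obtain V e where V: "unitary V" and Md: "M = V ** real_diag e ** adjoint V" and e: "\<And>i. e i > 0"
    using pd_decomp[OF pM] by blast
  define mu where "mu = lambda_min M"
  have mu_pos: "mu > 0" using lambda_min_le(1)[OF V Md] e by (auto simp: mu_def)
  have le4: "loewner_le (mat (complex_of_real mu)) M"
    unfolding Md by (rule fc_ge_const[OF V]) (use lambda_min_le(2)[OF V Md] in \<open>simp add: mu_def\<close>)
  have le5: "loewner_le (mat (complex_of_real mu)) Xt"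
    using loewner_trans[OF le4] le3 iR iXmt by simp
  have dge: "mu powr (1/t) \<le> d i" for i
  proof -
    have "Re (quad_form (mat (complex_of_real mu)) (U *v ev i)) \<le> Re (quad_form Xt (U *v ev i))"
      using le5 by (simp add: loewner_le_iff)
    then have "mu \<le> d i powr t"
      by (simp add: quad_form_mat Xt_def qf_col[OF U] norm_Uev[OF U])
    then have "mu powr (1/t) \<le> (d i powr t) powr (1/t)"
      using mu_pos t by (intro powr_mono2) auto
    also have "\<dots> = d i" using t d[of i] by (simp add: powr_powr)
    finally show ?thesis .
  qed
  show ?thesis unfolding Xd using fc_ge_const[OF U dge] by (simp add: mu_def M_def)
qed

theorem mainTheorem6:
  fixes s t p :: real and A B Q X :: "complex^'n^'n"
  assumes "s \<ge> 1" and "t \<ge> 1" and "p \<ge> 1"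
    and "invertible A" and "invertible B" and "pos_def Q"
    and "pos_def X"
    and "mat_powr X s + adjoint A ** mat_powr X (-t) ** A
           + adjoint B ** mat_powr X (-p) ** B = Q"
  shows "loewner_le
           (mat (complex_of_real
              (max (lambda_min (A ** matrix_inv Q ** adjoint A) powr (1/t))
                   (lambda_min (B ** matrix_inv Q ** adjoint B) powr (1/p)))))
           X
         \<and> loewner_le X (mat_powr Q (1/s))"
proof -
  note s = assms(1) and t = assms(2) and p = assms(3) and A = assms(4) and B = assms(5)
    and Q = assms(6) and X = assms(7) and eq = assms(8)
  obtain U d where U: "unitary U" and Xd: "X = U ** real_diag d ** adjoint U" and d: "\<And>i. d i > 0"
    using pd_decomp[OF X] by blast
  define Xs where "Xs = mat_powr X s"
  define P1 where "P1 = adjoint A ** mat_powr X (-t) ** A"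
  define P2 where "P2 = adjoint B ** mat_powr X (-p) ** B"
  have Xs_eq: "Xs = U ** real_diag (\<lambda>i. d i powr s) ** adjoint U" unfolding Xs_def by (rule mat_powr_eq[OF U Xd])
  have dnz: "d i \<noteq> 0" for i using d[of i] by simp
  have pXs: "pos_def Xs" unfolding Xs_eq by (rule fc_pd[OF U]) (simp add: dnz)
  have psd1: "pos_semidef P1" unfolding P1_def
    by (rule psd_cong) (simp add: mat_powr_eq[OF U Xd] fc_psd)
  have psd2: "pos_semidef P2" unfolding P2_def
    by (rule psd_cong) (simp add: mat_powr_eq[OF U Xd] fc_psd)
  have Qeq: "Q = Xs + P1 + P2" using eq by (simp add: Xs_def P1_def P2_def)
  have hQ: "hermitian Q" using Q by (simp add: pos_def_def)
  have qQ: "Re (quad_form Q v) = Re (quad_form Xs v) + Re (quad_form P1 v) + Re (quad_form P2 v)" for v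
    by (simp add: Qeq quad_form_add)
  have q1: "Re (quad_form P1 v) \<ge> 0" "Re (quad_form P2 v) \<ge> 0" for v
    using psd1 psd2 by (auto simp: pos_semidef_def)
  have hP1: "hermitian P1" "hermitian P2" "hermitian Xs" using psd1 psd2 pXs by (auto simp: pos_semidef_def pos_def_def)
  have leXsQ: "loewner_le Xs Q" using hP1 hQ qQ q1 by (simp add: loewner_le_iff add_increasing2 add.assoc)
  have s0: "0 < 1 / s" "1 / s \<le> 1" using s by auto
  have "mat_powr Xs (1/s) = U ** real_diag (\<lambda>i. (d i powr s) powr (1/s)) ** adjoint U"
    by (rule mat_powr_eq[OF U Xs_eq])
  also have "(\<lambda>i. (d i powr s) powr (1/s)) = d" using s d by (simp add: fun_eq_iff powr_powr less_imp_le)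
  finally have "mat_powr Xs (1/s) = X" using Xd by simp
  then have up: "loewner_le X (mat_powr Q (1/s))" using LH[OF pXs Q leXsQ s0] by simp
  have qXs: "Re (quad_form Xs v) \<ge> 0" for v using pd_psd[OF pXs] by (simp add: pos_semidef_def)
  have le1: "loewner_le P1 Q" using hP1 hQ qQ q1 qXs by (simp add: loewner_le_iff add_nonneg_nonneg)
  have le2: "loewner_le P2 Q" using hP1 hQ qQ q1 qXs by (simp add: loewner_le_iff add_nonneg_nonneg)
  have lb1: "loewner_le (mat (complex_of_real (lambda_min (A ** matrix_inv Q ** adjoint A) powr (1/t)))) X"
    using lower_bound[OF _ A Q X le1[unfolded P1_def]] t by simp
  have lb2: "loewner_le (mat (complex_of_real (lambda_min (B ** matrix_inv Q ** adjoint B) powr (1/p)))) X"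
    using lower_bound[OF _ B Q X le2[unfolded P2_def]] p by simp
  have lb: "loewner_le (mat (complex_of_real
              (max (lambda_min (A ** matrix_inv Q ** adjoint A) powr (1/t))
                   (lambda_min (B ** matrix_inv Q ** adjoint B) powr (1/p))))) X"
    by (cases "lambda_min (A ** matrix_inv Q ** adjoint A) powr (1/t) \<le> lambda_min (B ** matrix_inv Q ** adjoint B) powr (1/p)")
       (simp_all add: max_def lb1 lb2)
  show ?thesis using lb up by blast
qed


end
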